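(* Let $L=\{<,\ldots\}$ be a countable first order language containing a binary relation symbol $<$, and let $T$ be a complete $L$-theory with Skolem functions in which $<$ is interpreted as a linear order. Suppose $T$ satisfies the inaccessibility scheme. Let $M\models T$, let $\psi(\bar{x},\bar{t})$ be an $L$-formula and $\bar{b}\in M$ with $|\bar{b}|=|\bar{t}|$ such that $\psi(\bar{x},\bar{b})$ is $\bar{x}$-unbounded in $M$. Let $\varphi(\bar{x},\bar{t}')$ be an $L$-formula and $a\in M$. Then there is a tuple $\bar{c}\in M$ with $|\bar{c}|=|\bar{x}|$ such that $E_{\varphi}(\bar{x},\bar{c};a)\wedge\psi(\bar{x},\bar{b})$ is $\bar{x}$-unbounded in $M$.
   Context: For a formula $\varphi(\bar{x},\bar{t})$ and tuples $\bar{y}_0,\bar{y}_1$ of the same length as $\bar{x}$, write $E_{\varphi}(\bar{y}_0,\bar{y}_1;z_0)$ for the formula $(\forall \bar{t}<z_0)(\varphi(\bar{y}_0,\bar{t})\leftrightarrow\varphi(\bar{y}_1,\bar{t}))$; here $\bar{t}<z_0$ means every coordinate of $\bar{t}$ is $<z_0$. $T$ satisfies the inaccessibility scheme if for every formula $\varphi(\bar{x},\bar{t})$ of $L$ (with $\bar{x}$ a tuple of any finite length), $T\models (\forall z_0)(\exists z_1>z_0)(\forall\bar{y}_0)(\exists\bar{y}_1<z_1)E_{\varphi}(\bar{y}_0,\bar{y}_1;z_0)$. "$T$ has Skolem functions" means that for every formula $\theta(y,\bar{x})$ there is a term $\tau(\bar{x})$ of $L$ with $T\models \forall\bar{x}(\exists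 y\,\theta(y,\bar{x})\to\theta(\tau(\bar{x}),\bar{x}))$. For $\bar{x}=(x_1,\ldots,x_n)$ and a formula $\chi(\bar{x})$ with parameters from $M$, $\chi(\bar{x})$ is $\bar{x}$-unbounded in $M$ if $M\models(\forall\alpha_1)(\exists x_1>\alpha_1)(\forall\alpha_2)(\exists x_2>\alpha_2)\cdots(\forall\alpha_n)(\exists x_n>\alpha_n)\chi(\bar{x})$; otherwise it is $\bar{x}$-bounded. *)

theory Defs
  imports "HOL-Library.Countable_Set"
begin

text \<open>Constants are 0-ary function symbols.\<close>

datatype 'f trm = Var nat | Fn 'f "'f trm list"

datatype ('f, 'r) fm =
    Eq "'f trm" "'f trm"
  | Rl 'r "'f trm list"
  | Neg "('f, 'r) fm"
  | Conj "('f, 'r) fm" "('f, 'r) fm"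
  | Ex nat "('f, 'r) fm"

fun vars_trm :: "'f trm \<Rightarrow> nat set" where
  "vars_trm (Var v) = {v}"
| "vars_trm (Fn f ts) = (\<Union>t\<in>set ts. vars_trm t)"

fun fv :: "('f, 'r) fm \<Rightarrow> nat set" where
  "fv (Eq s t) = vars_trm s \<union> vars_trm t"
| "fv (Rl r ts) = (\<Union>t\<in>set ts. vars_trm t)"
| "fv (Neg p) = fv p"
| "fv (Conj p q) = fv p \<union> fv q"
| "fv (Ex v p) = fv p - {v}"

fun wf_trm :: "('f \<Rightarrow> nat) \<Rightarrow> 'f trm \<Rightarrow> bool" where
  "wf_trm fa (Var v) = True"
| "wf_trm fa (Fn f ts) = (length ts = fa f \<and> (\<forall>t\<in>set ts. wf_trm fa t))"

fun wf_fm :: "('f \<Rightarrow> nat) \<Rightarrow> ('r \<Rightarrow> nat) \<Rightarrow> ('f, 'r) fm \<Rightarrow> bool" where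
  "wf_fm fa ra (Eq s t) = (wf_trm fa s \<and> wf_trm fa t)"
| "wf_fm fa ra (Rl r ts) = (length ts = ra r \<and> (\<forall>t\<in>set ts. wf_trm fa t))"
| "wf_fm fa ra (Neg p) = wf_fm fa ra p"
| "wf_fm fa ra (Conj p q) = (wf_fm fa ra p \<and> wf_fm fa ra q)"
| "wf_fm fa ra (Ex v p) = wf_fm fa ra p"

definition sentence :: "('f \<Rightarrow> nat) \<Rightarrow> ('r \<Rightarrow> nat) \<Rightarrow> ('f, 'r) fm \<Rightarrow> bool" where
  "sentence fa ra p \<longleftrightarrow> wf_fm fa ra p \<and> fv p = {}"

record ('f, 'r, 'a) struct =
  sdom :: "'a set"
  sfun :: "'f \<Rightarrow> 'a list \<Rightarrow> 'a"
  srel :: "'r \<Rightarrow> 'a list \<Rightarrow> bool"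

definition is_struct :: "('f \<Rightarrow> nat) \<Rightarrow> ('f, 'r, 'a) struct \<Rightarrow> bool" where
  "is_struct fa N \<longleftrightarrow> sdom N \<noteq> {} \<and>
     (\<forall>f as. length as = fa f \<and> set as \<subseteq> sdom N \<longrightarrow> sfun N f as \<in> sdom N)"

fun eval :: "('f, 'r, 'a) struct \<Rightarrow> (nat \<Rightarrow> 'a) \<Rightarrow> 'f trm \<Rightarrow> 'a" where
  "eval N e (Var v) = e v"
| "eval N e (Fn f ts) = sfun N f (map (eval N e) ts)"

fun sat :: "('f, 'r, 'a) struct \<Rightarrow> (nat \<Rightarrow> 'a) \<Rightarrow> ('f, 'r) fm \<Rightarrow> bool" where
  "sat N e (Eq s t) = (eval N e s = eval N e t)"
| "sat N e (Rl r ts) = srel N r (map (eval N e) ts)"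
| "sat N e (Neg p) = (\<not> sat N e p)"
| "sat N e (Conj p q) = (sat N e p \<and> sat N e q)"
| "sat N e (Ex v p) = (\<exists>a\<in>sdom N. sat N (e(v := a)) p)"

definition env_in :: "('f, 'r, 'a) struct \<Rightarrow> (nat \<Rightarrow> 'a) \<Rightarrow> bool" where
  "env_in N e \<longleftrightarrow> range e \<subseteq> sdom N"

definition sat_sent :: "('f, 'r, 'a) struct \<Rightarrow> ('f, 'r) fm \<Rightarrow> bool" where
  "sat_sent N p \<longleftrightarrow> (\<forall>e. env_in N e \<longrightarrow> sat N e p)"

fun upd_list :: "(nat \<Rightarrow> 'a) \<Rightarrow> nat list \<Rightarrow> 'a list \<Rightarrow> nat \<Rightarrow> 'a" where
  "upd_list e (v # vs) (a # as) = (upd_list e vs as)(v := a)"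
| "upd_list e _ _ = e"

text \<open>p(vs) holds at the tuple as (other variables get an arbitrary element of the domain;
  irrelevant when fv p is contained in set vs).\<close>
definition sat_at :: "('f, 'r, 'a) struct \<Rightarrow> ('f, 'r) fm \<Rightarrow> nat list \<Rightarrow> 'a list \<Rightarrow> bool" where
  "sat_at N p vs as = sat N (upd_list (\<lambda>_. SOME d. d \<in> sdom N) vs as) p"

definition is_theory :: "('f \<Rightarrow> nat) \<Rightarrow> ('r \<Rightarrow> nat) \<Rightarrow> ('f, 'r) fm set \<Rightarrow> bool" where
  "is_theory fa ra T \<longleftrightarrow> (\<forall>p\<in>T. sentence fa ra p)"

definition model :: "('f \<Rightarrow> nat) \<Rightarrow> ('f, 'r) fm set \<Rightarrow> ('f, 'r, 'a) struct \<Rightarrow> bool" where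
  "model fa T N \<longleftrightarrow> is_struct fa N \<and> (\<forall>p\<in>T. sat_sent N p)"

text \<open>Semantic consequence, quantifying over all models whose carrier lives in the type 'a.\<close>
definition entails :: "'a itself \<Rightarrow> ('f \<Rightarrow> nat) \<Rightarrow> ('f, 'r) fm set \<Rightarrow> ('f, 'r) fm \<Rightarrow> bool" where
  "entails (_ :: 'a itself) fa T p \<longleftrightarrow>
     (\<forall>N :: ('f, 'r, 'a) struct. model fa T N \<longrightarrow> sat_sent N p)"

definition complete_theory :: "'a itself \<Rightarrow> ('f \<Rightarrow> nat) \<Rightarrow> ('r \<Rightarrow> nat) \<Rightarrow> ('f, 'r) fm set \<Rightarrow> bool" where
  "complete_theory A fa ra T \<longleftrightarrow>
     (\<forall>p. sentence fa ra p \<longrightarrow> entails A fa T p \<or> entails A fa T (Neg p))"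

definition linear_theory :: "'a itself \<Rightarrow> ('f \<Rightarrow> nat) \<Rightarrow> 'r \<Rightarrow> ('f, 'r) fm set \<Rightarrow> bool" where
  "linear_theory (_ :: 'a itself) fa lt T \<longleftrightarrow>
     (\<forall>N :: ('f, 'r, 'a) struct. model fa T N \<longrightarrow>
        (\<forall>x\<in>sdom N. \<not> srel N lt [x, x]) \<and>
        (\<forall>x\<in>sdom N. \<forall>y\<in>sdom N. \<forall>z\<in>sdom N. srel N lt [x, y] \<longrightarrow> srel N lt [y, z] \<longrightarrow> srel N lt [x, z]) \<and>
        (\<forall>x\<in>sdom N. \<forall>y\<in>sdom N. srel N lt [x, y] \<or> x = y \<or> srel N lt [y, x]))"

text \<open>Skolem functions: for every formula theta(y, xs) there is a term tau(xs) such that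
  T entails the universal closure of (Ex y theta) --> theta(tau(xs), xs)
  (written out semantically).\<close>
definition has_skolem :: "'a itself \<Rightarrow> ('f \<Rightarrow> nat) \<Rightarrow> ('r \<Rightarrow> nat) \<Rightarrow> ('f, 'r) fm set \<Rightarrow> bool" where
  "has_skolem (_ :: 'a itself) fa ra T \<longleftrightarrow>
     (\<forall>\<theta> y. wf_fm fa ra \<theta> \<longrightarrow>
        (\<exists>\<tau>. wf_trm fa \<tau> \<and> vars_trm \<tau> \<subseteq> fv \<theta> - {y} \<and>
          (\<forall>N :: ('f, 'r, 'a) struct. model fa T N \<longrightarrow>
            (\<forall>e. env_in N e \<longrightarrow>
               (\<exists>a\<in>sdom N. sat N (e(y := a)) \<theta>) \<longrightarrow> sat N (e(y := eval N e \<tau>)) \<theta>))))"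

definition E_phi :: "'r \<Rightarrow> ('f, 'r, 'a) struct \<Rightarrow> ('f, 'r) fm \<Rightarrow> nat list \<Rightarrow> nat list
     \<Rightarrow> 'a list \<Rightarrow> 'a list \<Rightarrow> 'a \<Rightarrow> bool" where
  "E_phi lt N \<phi> xs ts ys0 ys1 z0 \<longleftrightarrow>
     (\<forall>tv. length tv = length ts \<and> set tv \<subseteq> sdom N \<and> (\<forall>t\<in>set tv. srel N lt [t, z0]) \<longrightarrow>
        (sat_at N \<phi> (xs @ ts) (ys0 @ tv) \<longleftrightarrow> sat_at N \<phi> (xs @ ts) (ys1 @ tv)))"

text \<open>phi(xs, ts): xs and ts lists of pairwise distinct variables containing all free variables.\<close>
definition fm_in :: "('f \<Rightarrow> nat) \<Rightarrow> ('r \<Rightarrow> nat) \<Rightarrow> ('f, 'r) fm \<Rightarrow> nat list \<Rightarrow> nat list \<Rightarrow> bool" where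
  "fm_in fa ra \<phi> xs ts \<longleftrightarrow> wf_fm fa ra \<phi> \<and> distinct (xs @ ts) \<and> fv \<phi> \<subseteq> set xs \<union> set ts"

definition inaccessible :: "'a itself \<Rightarrow> ('f \<Rightarrow> nat) \<Rightarrow> ('r \<Rightarrow> nat) \<Rightarrow> 'r \<Rightarrow> ('f, 'r) fm set \<Rightarrow> bool" where
  "inaccessible (_ :: 'a itself) fa ra lt T \<longleftrightarrow>
     (\<forall>\<phi> xs ts. fm_in fa ra \<phi> xs ts \<longrightarrow>
       (\<forall>N :: ('f, 'r, 'a) struct. model fa T N \<longrightarrow>
         (\<forall>z0\<in>sdom N. \<exists>z1\<in>sdom N. srel N lt [z0, z1] \<and>
           (\<forall>ys0. length ys0 = length xs \<and> set ys0 \<subseteq> sdom N \<longrightarrow>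
             (\<exists>ys1. length ys1 = length xs \<and> set ys1 \<subseteq> sdom N \<and>
                (\<forall>y\<in>set ys1. srel N lt [y, z1]) \<and>
                E_phi lt N \<phi> xs ts ys0 ys1 z0)))))"

text \<open>unb N lt P acc k: (forall a1)(exists x1 > a1) ... (forall ak)(exists xk > ak) P(acc @ [x1..xk]).\<close>
fun unb :: "'r \<Rightarrow> ('f, 'r, 'a) struct \<Rightarrow> ('a list \<Rightarrow> bool) \<Rightarrow> 'a list \<Rightarrow> nat \<Rightarrow> bool" where
  "unb lt N P acc 0 = P acc"
| "unb lt N P acc (Suc k) =
     (\<forall>\<alpha>\<in>sdom N. \<exists>x\<in>sdom N. srel N lt [\<alpha>, x] \<and> unb lt N P (acc @ [x]) k)"

definition unbounded :: "'r \<Rightarrow> ('f, 'r, 'a) struct \<Rightarrow> nat \<Rightarrow> ('a list \<Rightarrow> bool) \<Rightarrow> bool" where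
  "unbounded lt N n P \<longleftrightarrow> unb lt N P [] n"

end

theory Submission
  imports Defs
begin

lemma eval_cong: "(\<forall>v\<in>vars_trm t. e v = e' v) \<Longrightarrow> eval N e t = eval N e' t"
  by (induction t) (auto cong: map_cong)

lemma sat_cong: "(\<forall>v\<in>fv p. e v = e' v) \<Longrightarrow> sat N e p = sat N e' p"
proof (induction p arbitrary: e e')
  case (Eq s t) then show ?case by (auto intro!: eval_cong arg_cong2[where f="(=)"])
next
  case (Rl r ts)
  have "map (eval N e) ts = map (eval N e') ts" using Rl.prems by (intro map_cong refl eval_cong) auto
  then show ?case by (simp only: sat.simps)
next
  case (Ex v p)
  have "\<And>a. sat N (e(v:=a)) p = sat N (e'(v:=a)) p" using Ex.prems by (intro Ex.IH) auto
  then show ?case by simp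
next
  case (Conj p q)
  then have "sat N e p = sat N e' p" "sat N e q = sat N e' q" by auto
  then show ?case by simp
qed auto

lemma upd_notin: "v \<notin> set vs \<Longrightarrow> upd_list e vs as v = e v"
  by (induction e vs as rule: upd_list.induct) auto

lemma upd_in: "length as = length vs \<Longrightarrow> v \<in> set vs \<Longrightarrow> upd_list e vs as v \<in> set as"
  by (induction e vs as rule: upd_list.induct) auto

lemma upd_agree: "length as = length vs \<Longrightarrow> v \<in> set vs \<Longrightarrow> upd_list e vs as v = upd_list e' vs as v"
  by (induction e vs as rule: upd_list.induct) auto

lemma upd_map_self: "v \<in> set vs \<Longrightarrow> upd_list e' vs (map e vs) v = e v"
  by (induction vs) auto

lemma map_upd: "distinct vs \<Longrightarrow> length as = length vs \<Longrightarrow> map (upd_list e vs as) vs = as"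
proof (induction vs arbitrary: as)
  case (Cons v vs)
  then obtain a l where as: "as = a # l" by (cases as) auto
  have "map ((upd_list e vs l)(v:=a)) vs = map (upd_list e vs l) vs"
    by (rule map_cong) (use Cons.prems in auto)
  also have "\<dots> = l" using Cons.IH[of l] Cons.prems as by simp
  finally show ?case using as by (simp only: upd_list.simps list.map fun_upd_same)
qed simp

lemma upd_append: "length as = length vs \<Longrightarrow> upd_list e (vs@ws) (as@bs) = upd_list (upd_list e ws bs) vs as"
proof (induction vs arbitrary: as)
  case Nil then show ?case by (cases ws; cases bs) auto
next
  case (Cons v vs) then show ?case by (cases as) auto
qed

lemma upd_update: "distinct vs \<Longrightarrow> i < length vs \<Longrightarrow> length as = length vs \<Longrightarrow>
   (upd_list e vs as)(vs!i := x) = upd_list e vs (as[i:=x])"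
proof (induction vs arbitrary: as i)
  case (Cons v vs)
  then obtain a as' where as: "as = a # as'" by (cases as) auto
  show ?case
  proof (cases i)
    case 0 then show ?thesis using as by auto
  next
    case (Suc j)
    then have "vs ! j \<noteq> v" using Cons.prems by auto
    have IH: "(upd_list e vs as')(vs!j := x) = upd_list e vs (as'[j:=x])"
      by (rule Cons.IH) (use Cons.prems as Suc in auto)
    show ?thesis using as Suc \<open>vs ! j \<noteq> v\<close> by (auto simp: IH[symmetric] intro!: ext)
  qed
qed simp

lemma env_upd: "env_in N e \<Longrightarrow> set as \<subseteq> sdom N \<Longrightarrow> env_in N (upd_list e vs as)"
  unfolding env_in_def
  by (induction e vs as rule: upd_list.induct) (auto simp: image_subset_iff)

lemma env_upd1: "env_in N e \<Longrightarrow> a \<in> sdom N \<Longrightarrow> env_in N (e(v:=a))"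
  unfolding env_in_def by auto

definition dfn :: "('f\<Rightarrow>nat) \<Rightarrow> ('r\<Rightarrow>nat) \<Rightarrow> ('f,'r,'a) struct \<Rightarrow> nat set \<Rightarrow> ((nat\<Rightarrow>'a) \<Rightarrow> bool) \<Rightarrow> bool" where
"dfn fa ra N U Q \<longleftrightarrow> (\<exists>p. wf_fm fa ra p \<and> fv p \<subseteq> U \<and> (\<forall>e. env_in N e \<longrightarrow> sat N e p = Q e))"

lemma dfn_resp: "dfn fa ra N U Q \<Longrightarrow> env_in N e \<Longrightarrow> env_in N e' \<Longrightarrow> \<forall>v\<in>U. e v = e' v \<Longrightarrow> Q e = Q e'"
  unfolding dfn_def by (metis sat_cong subsetD)

lemma dfn_mono: "dfn fa ra N U Q \<Longrightarrow> U \<subseteq> U' \<Longrightarrow> dfn fa ra N U' Q"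
  unfolding dfn_def by blast

lemma dfn_cong: "dfn fa ra N U Q \<Longrightarrow> (\<And>e. env_in N e \<Longrightarrow> Q e = Q' e) \<Longrightarrow> dfn fa ra N U Q'"
  unfolding dfn_def by metis

lemma dfn_sat: "wf_fm fa ra p \<Longrightarrow> fv p \<subseteq> U \<Longrightarrow> dfn fa ra N U (\<lambda>e. sat N e p)"
  unfolding dfn_def by blast

lemma dfn_neg: "dfn fa ra N U Q \<Longrightarrow> dfn fa ra N U (\<lambda>e. \<not> Q e)"
  unfolding dfn_def by (metis fv.simps(3) sat.simps(3) wf_fm.simps(3))

lemma dfn_conj: "dfn fa ra N U Q \<Longrightarrow> dfn fa ra N U R \<Longrightarrow> dfn fa ra N U (\<lambda>e. Q e \<and> R e)"
  unfolding dfn_def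
proof (elim exE conjE)
  fix p q assume "wf_fm fa ra p" "fv p \<subseteq> U" "\<forall>e. env_in N e \<longrightarrow> sat N e p = Q e"
    "wf_fm fa ra q" "fv q \<subseteq> U" "\<forall>e. env_in N e \<longrightarrow> sat N e q = R e"
  then show "\<exists>p. wf_fm fa ra p \<and> fv p \<subseteq> U \<and> (\<forall>e. env_in N e \<longrightarrow> sat N e p = (Q e \<and> R e))"
    by (intro exI[of _ "Conj p q"]) auto
qed

lemma dfn_ex: "dfn fa ra N U Q \<Longrightarrow> dfn fa ra N (U - {v}) (\<lambda>e. \<exists>a\<in>sdom N. Q (e(v:=a)))"
  unfolding dfn_def
proof (elim exE conjE)
  fix p assume "wf_fm fa ra p" "fv p \<subseteq> U" "\<forall>e. env_in N e \<longrightarrow> sat N e p = Q e"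
  then show "\<exists>p. wf_fm fa ra p \<and> fv p \<subseteq> U - {v} \<and> (\<forall>e. env_in N e \<longrightarrow> sat N e p = (\<exists>a\<in>sdom N. Q (e(v:=a))))"
    by (intro exI[of _ "Ex v p"]) (auto simp: env_upd1)
qed

lemma dfn_all: "dfn fa ra N U Q \<Longrightarrow> dfn fa ra N (U - {v}) (\<lambda>e. \<forall>a\<in>sdom N. Q (e(v:=a)))"
  by (rule dfn_cong[OF dfn_neg[OF dfn_ex[OF dfn_neg]]]) auto

lemma dfn_imp: assumes "dfn fa ra N U Q" "dfn fa ra N U R" shows "dfn fa ra N U (\<lambda>e. Q e \<longrightarrow> R e)"
  by (rule dfn_cong[OF dfn_neg[OF dfn_conj[OF assms(1) dfn_neg[OF assms(2)]]]]) auto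

lemma dfn_iff: assumes "dfn fa ra N U Q" "dfn fa ra N U R" shows "dfn fa ra N U (\<lambda>e. Q e \<longleftrightarrow> R e)"
  by (rule dfn_cong[OF dfn_conj[OF dfn_imp[OF assms] dfn_imp[OF assms(2,1)]]]) auto

lemma dfn_lt: "ra lt = 2 \<Longrightarrow> dfn fa ra N {u,w} (\<lambda>e. srel N lt [e u, e w])"
  unfolding dfn_def by (intro exI[of _ "Rl lt [Var u, Var w]"]) auto

lemma dfn_eq: "dfn fa ra N {u,w} (\<lambda>e. e u = e w)"
  unfolding dfn_def by (intro exI[of _ "Eq (Var u) (Var w)"]) auto

lemma dfn_true: "dfn fa ra N {u} (\<lambda>e. True)"
  unfolding dfn_def by (intro exI[of _ "Eq (Var u) (Var u)"]) auto

lemma dfn_all_list: "dfn fa ra N U Q \<Longrightarrow>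
  dfn fa ra N (U - set vs) (\<lambda>e. \<forall>tv. length tv = length vs \<and> set tv \<subseteq> sdom N \<longrightarrow> Q (upd_list e vs tv))"
proof (induction vs arbitrary: U Q)
  case Nil
  have "dfn fa ra N (U - set []) Q" using Nil by simp
  then show ?case by (rule dfn_cong) auto
next
  case (Cons v vs)
  have "dfn fa ra N (U - {v} - set vs) (\<lambda>e. \<forall>tv. length tv = length vs \<and> set tv \<subseteq> sdom N \<longrightarrow>
      (\<forall>a\<in>sdom N. Q ((upd_list e vs tv)(v:=a))))"
    using Cons.IH[OF dfn_all[OF Cons.prems]] .
  then show ?case
  proof (rule dfn_cong[OF dfn_mono])
    fix e show "(\<forall>tv. length tv = length vs \<and> set tv \<subseteq> sdom N \<longrightarrow> (\<forall>a\<in>sdom N. Q ((upd_list e vs tv)(v := a)))) =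
         (\<forall>tv. length tv = length (v # vs) \<and> set tv \<subseteq> sdom N \<longrightarrow> Q (upd_list e (v # vs) tv))"
    proof (intro iffI allI impI)
      fix tv assume H: "\<forall>tv. length tv = length vs \<and> set tv \<subseteq> sdom N \<longrightarrow> (\<forall>a\<in>sdom N. Q ((upd_list e vs tv)(v := a)))"
        and L: "length tv = length (v # vs) \<and> set tv \<subseteq> sdom N"
      then obtain a tv' where "tv = a # tv'" by (cases tv) auto
      with H L show "Q (upd_list e (v # vs) tv)" by auto
    next
      fix tv assume H: "\<forall>tv. length tv = length (v # vs) \<and> set tv \<subseteq> sdom N \<longrightarrow> Q (upd_list e (v # vs) tv)"
        and L: "length tv = length vs \<and> set tv \<subseteq> sdom N"
      show "\<forall>a\<in>sdom N. Q ((upd_list e vs tv)(v := a))"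
        using H[rule_format, of "_ # tv"] L by auto
    qed
  qed auto
qed

lemma dfn_subst1: "dfn fa ra N U Q \<Longrightarrow> v \<noteq> w \<Longrightarrow> dfn fa ra N (U - {v} \<union> {w}) (\<lambda>e. Q (e(v := e w)))"
proof -
  assume D: "dfn fa ra N U Q" and vw: "v \<noteq> w"
  have "dfn fa ra N ((U \<union> {v,w}) - {v}) (\<lambda>e. \<exists>a\<in>sdom N. (e(v:=a)) v = (e(v:=a)) w \<and> Q (e(v:=a)))"
    by (rule dfn_ex, rule dfn_conj; rule dfn_mono[OF dfn_eq] dfn_mono[OF D]) auto
  then show ?thesis
    by (rule dfn_cong[OF dfn_mono]) (use vw in \<open>auto simp: env_in_def\<close>)
qed

lemma dfn_subst: "dfn fa ra N U Q \<Longrightarrow> length ws = length vs \<Longrightarrow> set ws \<inter> set vs = {} \<Longrightarrow>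
   dfn fa ra N ((U - set vs) \<union> set ws) (\<lambda>e. Q (upd_list e vs (map e ws)))"
proof (induction vs arbitrary: ws U Q)
  case Nil then show ?case by (cases ws) (auto elim: dfn_cong)
next
  case (Cons v vs)
  then obtain w ws' where ws: "ws = w # ws'" by (cases ws) auto
  have D1: "dfn fa ra N (U - {v} \<union> {w}) (\<lambda>e. Q (e(v := e w)))"
    using Cons ws by (intro dfn_subst1) auto
  have "dfn fa ra N ((U - {v} \<union> {w}) - set vs \<union> set ws') (\<lambda>e. Q ((upd_list e vs (map e ws'))(v := (upd_list e vs (map e ws')) w)))"
    by (rule Cons.IH[OF D1]) (use Cons.prems ws in auto)
  then show ?case
  proof (rule dfn_cong[OF dfn_mono])
    fix e
    have "w \<notin> set vs" using Cons.prems ws by auto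
    then show "Q ((upd_list e vs (map e ws'))(v := upd_list e vs (map e ws') w)) = Q (upd_list e (v # vs) (map e ws))"
      using ws by (simp add: upd_notin)
  qed (use ws in auto)
qed

lemma sat_at_env:
  assumes "fv p \<subseteq> insert Y (set TS)" "env_in N g" "a \<in> sdom N"
  shows "sat_at N p (Y#TS) (a # map g TS) = sat N (g(Y:=a)) p"
  unfolding sat_at_def
  by (rule sat_cong) (use assms in \<open>auto simp: upd_map_self\<close>)

lemma dfn_bnd: "ra lt = 2 \<Longrightarrow> dfn fa ra N (insert A (set vs)) (\<lambda>e. \<forall>v\<in>set vs. srel N lt [e v, e A])"
proof (induction vs)
  case Nil
  have "dfn fa ra N {A} (\<lambda>e. True)" by (rule dfn_true)
  then show ?case by (rule dfn_cong[OF dfn_mono]) auto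
next
  case (Cons v vs)
  have "dfn fa ra N (insert A (set (v#vs))) (\<lambda>e. srel N lt [e v, e A] \<and> (\<forall>v\<in>set vs. srel N lt [e v, e A]))"
    by (rule dfn_conj; rule dfn_mono[OF dfn_lt] dfn_mono[OF Cons.IH]) (use Cons.prems in auto)
  then show ?case by (rule dfn_cong) auto
qed

locale setting =
  fixes fa :: "'f \<Rightarrow> nat" and ra :: "'r \<Rightarrow> nat" and lt :: 'r
    and T :: "('f, 'r) fm set" and M :: "('f, 'r, 'a) struct"
  assumes ra_lt: "ra lt = 2"
  and lin: "linear_theory TYPE('a) fa lt T"
  and inacc: "inaccessible TYPE('a) fa ra lt T"
  and mdl: "model fa T M"
begin

lemma lt_trans: "x \<in> sdom M \<Longrightarrow> y \<in> sdom M \<Longrightarrow> z \<in> sdom M \<Longrightarrow> srel M lt [x,y] \<Longrightarrow> srel M lt [y,z] \<Longrightarrow> srel M lt [x,z]"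
  using lin mdl unfolding linear_theory_def by blast

lemma lt_total: "x \<in> sdom M \<Longrightarrow> y \<in> sdom M \<Longrightarrow> srel M lt [x,y] \<or> x = y \<or> srel M lt [y,x]"
  using lin mdl unfolding linear_theory_def by blast

lemma dom_ne: "sdom M \<noteq> {}"
  using mdl unfolding model_def is_struct_def by blast

lemma upper:
  assumes nomax: "\<forall>x\<in>sdom M. \<exists>y\<in>sdom M. srel M lt [x,y]"
  shows "finite F \<Longrightarrow> F \<subseteq> sdom M \<Longrightarrow> \<exists>z\<in>sdom M. \<forall>f\<in>F. srel M lt [f,z]"
proof (induction F rule: finite_induct)
  case empty then show ?case using dom_ne by auto
next
  case (insert x F)
  then obtain z where z: "z \<in> sdom M" "\<forall>f\<in>F. srel M lt [f,z]" by auto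
  have x: "x \<in> sdom M" using insert by auto
  show ?case
  proof (cases "srel M lt [x,z]")
    case True then show ?thesis using z by auto
  next
    case False
    then have "x = z \<or> srel M lt [z,x]" using lt_total[OF x z(1)] by auto
    obtain w where w: "w \<in> sdom M" "srel M lt [x,w]" using nomax x by auto
    have "srel M lt [z,w]" using \<open>x = z \<or> srel M lt [z,x]\<close> w lt_trans[OF z(1) x w(1)] by auto
    show ?thesis
    proof (intro bexI[OF _ w(1)] ballI)
      fix f assume "f \<in> insert x F"
      then show "srel M lt [f, w]" using w z insert.prems lt_trans[OF _ z(1) w(1)] \<open>srel M lt [z,w]\<close> by auto
    qed
  qed
qed

lemma uniform:
  assumes D: "dfn fa ra M (insert Y (set TS)) Q" and dist: "distinct (Y#TS)" and z: "z \<in> sdom M"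
  and G: "\<And>g. g\<in>G \<Longrightarrow> env_in M g \<and> (\<forall>v\<in>set TS. srel M lt [g v, z]) \<and> (\<exists>\<alpha>\<in>sdom M. Q (g(Y:=\<alpha>))) \<and>
       (\<forall>\<alpha>\<in>sdom M. \<forall>\<beta>\<in>sdom M. Q (g(Y:=\<alpha>)) \<longrightarrow> srel M lt [\<alpha>,\<beta>] \<longrightarrow> Q (g(Y:=\<beta>)))"
  shows "\<exists>\<alpha>\<in>sdom M. \<forall>g\<in>G. Q (g(Y:=\<alpha>))"
proof -
  obtain \<chi> where chi: "wf_fm fa ra \<chi>" "fv \<chi> \<subseteq> insert Y (set TS)" "\<forall>e. env_in M e \<longrightarrow> sat M e \<chi> = Q e"
    using D unfolding dfn_def by blast
  have fm: "fm_in fa ra \<chi> [Y] TS" unfolding fm_in_def using chi dist by auto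
  obtain z1 where z1: "z1 \<in> sdom M"
    "\<forall>ys0. length ys0 = length [Y] \<and> set ys0 \<subseteq> sdom M \<longrightarrow>
             (\<exists>ys1. length ys1 = length [Y] \<and> set ys1 \<subseteq> sdom M \<and>
                (\<forall>y\<in>set ys1. srel M lt [y, z1]) \<and>
                E_phi lt M \<chi> [Y] TS ys0 ys1 z)"
    using inacc mdl fm z unfolding inaccessible_def by blast
  show ?thesis
  proof (intro bexI[OF _ z1(1)] ballI)
    fix g assume g: "g \<in> G"
    note Gg = G[OF g]
    obtain \<alpha> where \<alpha>: "\<alpha> \<in> sdom M" "Q (g(Y:=\<alpha>))" using Gg by blast
    obtain ys1 where ys1: "length ys1 = 1" "set ys1 \<subseteq> sdom M" "\<forall>y\<in>set ys1. srel M lt [y, z1]"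
      "E_phi lt M \<chi> [Y] TS [\<alpha>] ys1 z" using z1(2)[rule_format, of "[\<alpha>]"] \<alpha> by auto
    then obtain \<alpha>' where a': "ys1 = [\<alpha>']" by (cases ys1) auto
    have a'D: "\<alpha>' \<in> sdom M" "srel M lt [\<alpha>', z1]" using ys1 a' by auto
    have env: "env_in M g" using Gg by blast
    have tv: "length (map g TS) = length TS \<and> set (map g TS) \<subseteq> sdom M \<and> (\<forall>t\<in>set (map g TS). srel M lt [t, z])"
      using Gg env unfolding env_in_def by auto
    have "sat_at M \<chi> ([Y] @ TS) ([\<alpha>] @ map g TS) = sat_at M \<chi> ([Y] @ TS) ([\<alpha>'] @ map g TS)"
      using ys1(4) tv unfolding E_phi_def a' by blast
    then have "sat M (g(Y:=\<alpha>)) \<chi> = sat M (g(Y:=\<alpha>')) \<chi>"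
      using sat_at_env[OF chi(2) env] \<alpha>(1) a'D(1) by simp
    then have "Q (g(Y:=\<alpha>'))" using chi(3) \<alpha> a'D env_upd1[OF env] by metis
    then show "Q (g(Y:=z1))" using Gg a'D z1(1) by blast
  qed
qed

end

definition EQ :: "'r \<Rightarrow> ('f,'r,'a) struct \<Rightarrow> ('f,'r) fm \<Rightarrow> nat list \<Rightarrow> nat list \<Rightarrow> nat list \<Rightarrow> nat \<Rightarrow> nat list \<Rightarrow> (nat \<Rightarrow> 'a) \<Rightarrow> bool" where
"EQ lt N \<phi> xs ts' C A T2 e \<longleftrightarrow> (\<forall>tv. length tv = length T2 \<and> set tv \<subseteq> sdom N \<longrightarrow>
   ((\<forall>v\<in>set T2. srel N lt [upd_list e T2 tv v, upd_list e T2 tv A]) \<longrightarrow>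
    (sat N (upd_list (upd_list e T2 tv) ts' (map (upd_list e T2 tv) T2)) \<phi> \<longleftrightarrow>
     sat N (upd_list (upd_list e T2 tv) (xs@ts') (map (upd_list e T2 tv) (C@T2))) \<phi>)))"

lemma EQ_dfn:
  assumes lt2: "ra lt = 2" and fm: "fm_in fa ra \<phi> xs ts'" and lC: "length C = length xs" and lT: "length T2 = length ts'"
   and d1: "set C \<inter> (set xs \<union> set ts') = {}" and d2: "set T2 \<inter> (set xs \<union> set ts') = {}"
   and d3: "set T2 \<inter> set C = {}" and d4: "A \<notin> set T2"
  shows "dfn fa ra N (set xs \<union> set C \<union> {A}) (EQ lt N \<phi> xs ts' C A T2)"
proof -
  have wf: "wf_fm fa ra \<phi>" and fvp: "fv \<phi> \<subseteq> set xs \<union> set ts'" using fm unfolding fm_in_def by auto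
  have S: "dfn fa ra N (set xs \<union> set ts') (\<lambda>e. sat N e \<phi>)" by (rule dfn_sat[OF wf fvp])
  let ?W = "set xs \<union> set C \<union> {A} \<union> set T2"
  have P1: "dfn fa ra N ?W (\<lambda>e. sat N (upd_list e ts' (map e T2)) \<phi>)"
    by (rule dfn_mono[OF dfn_subst[OF S]]) (use lT d2 in auto)
  have P2: "dfn fa ra N ?W (\<lambda>e. sat N (upd_list e (xs@ts') (map e (C@T2))) \<phi>)"
    by (rule dfn_mono[OF dfn_subst[OF S]]) (use lT lC d1 d2 in auto)
  have B: "dfn fa ra N ?W (\<lambda>e. \<forall>v\<in>set T2. srel N lt [e v, e A])"
    by (rule dfn_mono[OF dfn_bnd[where ra=ra and lt=lt, OF lt2]]) auto
  have I: "dfn fa ra N ?W (\<lambda>e. (\<forall>v\<in>set T2. srel N lt [e v, e A]) \<longrightarrow>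
     (sat N (upd_list e ts' (map e T2)) \<phi> \<longleftrightarrow> sat N (upd_list e (xs@ts') (map e (C@T2))) \<phi>))"
    by (rule dfn_imp[OF B dfn_iff[OF P1 P2]])
  show ?thesis
    by (rule dfn_cong[OF dfn_mono[OF dfn_all_list[OF I, of T2]]]) (auto simp: EQ_def)
qed

lemma EQ_eq:
  assumes fm: "fm_in fa ra \<phi> xs ts'" and lC: "length C = length xs" and lT: "length T2 = length ts'"
   and dT: "distinct T2"
   and d1: "set C \<inter> (set xs \<union> set ts') = {}" and d2: "set T2 \<inter> (set xs \<union> set ts') = {}"
   and d3: "set T2 \<inter> set C = {}" and d4: "A \<notin> set T2"
  shows "EQ lt N \<phi> xs ts' C A T2 e \<longleftrightarrow> E_phi lt N \<phi> xs ts' (map e xs) (map e C) (e A)"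
proof -
  have fvp: "fv \<phi> \<subseteq> set xs \<union> set ts'" and dist: "distinct (xs @ ts')" using fm unfolding fm_in_def by auto
  have key: "((\<forall>v\<in>set T2. srel N lt [upd_list e T2 tv v, upd_list e T2 tv A]) \<longrightarrow>
    (sat N (upd_list (upd_list e T2 tv) ts' (map (upd_list e T2 tv) T2)) \<phi> \<longleftrightarrow>
     sat N (upd_list (upd_list e T2 tv) (xs@ts') (map (upd_list e T2 tv) (C@T2))) \<phi>))
   \<longleftrightarrow> ((\<forall>t\<in>set tv. srel N lt [t, e A]) \<longrightarrow>
        (sat_at N \<phi> (xs @ ts') (map e xs @ tv) \<longleftrightarrow> sat_at N \<phi> (xs @ ts') (map e C @ tv)))"
    if tv: "length tv = length T2" for tv
  proof -
    define e' where "e' = upd_list e T2 tv"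
    have mT: "map e' T2 = tv" unfolding e'_def by (rule map_upd[OF dT tv])
    have eA: "e' A = e A" unfolding e'_def using d4 by (simp add: upd_notin)
    have eC: "map e' C = map e C" unfolding e'_def
      by (rule map_cong[OF refl], rule upd_notin) (use d3 in auto)
    have b: "(\<forall>v\<in>set T2. srel N lt [e' v, e' A]) \<longleftrightarrow> (\<forall>t\<in>set tv. srel N lt [t, e A])"
      using mT eA by (metis (no_types, lifting) image_iff list.set_map)
    have s1: "sat N (upd_list e' ts' tv) \<phi> = sat_at N \<phi> (xs @ ts') (map e xs @ tv)"
      unfolding sat_at_def upd_append[OF length_map]
    proof (rule sat_cong, intro ballI)
      fix v assume v: "v \<in> fv \<phi>"
      show "upd_list e' ts' tv v = upd_list (upd_list (\<lambda>_. SOME d. d \<in> sdom N) ts' tv) xs (map e xs) v"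
      proof (cases "v \<in> set xs")
        case True
        then have "v \<notin> set ts'" "v \<notin> set T2" using dist d2 by auto
        then show ?thesis using True by (simp add: upd_notin upd_map_self e'_def)
      next
        case False
        then have "v \<in> set ts'" using v fvp by auto
        then show ?thesis using False tv lT by (simp add: upd_notin upd_agree[of tv ts'])
      qed
    qed
    have s2: "sat N (upd_list e' (xs@ts') (map e C @ tv)) \<phi> = sat_at N \<phi> (xs @ ts') (map e C @ tv)"
      unfolding sat_at_def
    proof (rule sat_cong, intro ballI)
      fix v assume "v \<in> fv \<phi>"
      then have "v \<in> set (xs@ts')" using fvp by auto
      then show "upd_list e' (xs @ ts') (map e C @ tv) v = upd_list (\<lambda>_. SOME d. d \<in> sdom N) (xs @ ts') (map e C @ tv) v"
        by (rule upd_agree[rotated]) (use tv lT lC in auto)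
    qed
    show ?thesis using b s1 s2 unfolding e'_def[symmetric] map_append mT eC by simp
  qed
  show ?thesis unfolding EQ_def E_phi_def using key lT by auto
qed

fun Wr :: "'r \<Rightarrow> ('f,'r,'a) struct \<Rightarrow> ((nat\<Rightarrow>'a)\<Rightarrow>bool) \<Rightarrow> nat list \<Rightarrow> nat \<Rightarrow> (nat\<Rightarrow>'a) \<Rightarrow> bool" where
  "Wr lt N B xs 0 e = B e"
| "Wr lt N B xs (Suc k) e = (\<forall>\<alpha>\<in>sdom N. \<exists>x\<in>sdom N. srel N lt [\<alpha>,x] \<and> Wr lt N B xs k (e(xs!(length xs - Suc k) := x)))"

lemma step_dfn:
  assumes lt2: "ra lt = 2" and W: "dfn fa ra N U W" and v: "v \<in> U" and Y: "Y \<notin> U"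
  shows "dfn fa ra N (insert Y U) (\<lambda>e. \<exists>x\<in>sdom N. srel N lt [e Y, x] \<and> W (e(v:=x)))"
proof -
  have I1: "dfn fa ra N (insert Y U) (\<lambda>e. srel N lt [e Y, e v] \<and> W e)"
    by (rule dfn_conj; rule dfn_mono[OF dfn_lt[where ra=ra and lt=lt, OF lt2]] dfn_mono[OF W]) (use v in auto)
  have "dfn fa ra N (insert Y U - {v}) (\<lambda>e. \<exists>x\<in>sdom N. srel N lt [(e(v:=x)) Y, (e(v:=x)) v] \<and> W (e(v:=x)))"
    by (rule dfn_ex[OF I1])
  then show ?thesis
    by (rule dfn_cong[OF dfn_mono]) (use v Y in auto)
qed

lemma Wr_dfn:
  assumes lt2: "ra lt = 2" and B: "dfn fa ra N U B" and xs: "set xs \<subseteq> U" "xs \<noteq> []" and Y: "Y \<notin> U"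
  shows "dfn fa ra N U (Wr lt N B xs k)"
proof (induction k)
  case 0 then show ?case using B by (simp add: dfn_cong)
next
  case (Suc k)
  let ?v = "xs!(length xs - Suc k)"
  have v: "?v \<in> U" using xs by (auto intro!: subsetD[OF xs(1)] nth_mem)
  have "dfn fa ra N (insert Y U - {Y}) (\<lambda>e. \<forall>a\<in>sdom N. (\<exists>x\<in>sdom N. srel N lt [(e(Y:=a)) Y, x] \<and> Wr lt N B xs k ((e(Y:=a))(?v:=x))))"
    by (rule dfn_all[OF step_dfn[OF lt2 Suc v Y]])
  then show ?case
  proof (rule dfn_cong[OF dfn_mono])
    fix e assume e: "env_in N e"
    have "Wr lt N B xs k ((e(Y:=a))(?v:=x)) = Wr lt N B xs k (e(?v:=x))" if "a \<in> sdom N" "x \<in> sdom N" for a x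
      by (rule dfn_resp[OF Suc]) (use e that Y in \<open>auto simp: env_in_def\<close>)
    then show "(\<forall>a\<in>sdom N. \<exists>x\<in>sdom N. srel N lt [(e(Y := a)) Y, x] \<and> Wr lt N B xs k (e(Y := a, ?v := x))) = Wr lt N B xs (Suc k) e"
      by auto
  qed (use Y in auto)
qed

theorem proposition2p2:
  fixes fa :: "'f \<Rightarrow> nat" and ra :: "'r \<Rightarrow> nat" and lt :: 'r
    and T :: "('f, 'r) fm set" and M :: "('f, 'r, 'a) struct"
    and \<psi> \<phi> :: "('f, 'r) fm" and xs ts ts' :: "nat list"
    and bs :: "'a list" and a :: 'a
  assumes "countable (UNIV :: 'f set)" and "countable (UNIV :: 'r set)"
    and "ra lt = 2"
    and "is_theory fa ra T"
    and "complete_theory TYPE('a) fa ra T"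
    and "linear_theory TYPE('a) fa lt T"
    and "has_skolem TYPE('a) fa ra T"
    and "inaccessible TYPE('a) fa ra lt T"
    and "model fa T M"
    and "fm_in fa ra \<psi> xs ts"
    and "length bs = length ts" and "set bs \<subseteq> sdom M"
    and "unbounded lt M (length xs) (\<lambda>ys. sat_at M \<psi> (xs @ ts) (ys @ bs))"
    and "fm_in fa ra \<phi> xs ts'"
    and "a \<in> sdom M"
  shows "\<exists>cs. length cs = length xs \<and> set cs \<subseteq> sdom M \<and>
           unbounded lt M (length xs)
             (\<lambda>ys. E_phi lt M \<phi> xs ts' ys cs a \<and> sat_at M \<psi> (xs @ ts) (ys @ bs))"
proof (cases "xs = []")
  case True
  then show ?thesis using assms(13) by (intro exI[of _ "[]"]) (auto simp: unbounded_def E_phi_def)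
next
  case False
  note lt2 = assms(3) and inacc = assms(8) and mdl = assms(9) and fmpsi = assms(10) and lbs = assms(11)
    and bsD = assms(12) and unbpsi = assms(13) and fmphi = assms(14) and aD = assms(15)
  interpret S: setting fa ra lt T M using assms by unfold_locales auto
  define n where "n = length xs"
  obtain n0 where n0: "n = Suc n0" using False n_def by (cases xs) auto
  have nomax: "\<forall>x\<in>sdom M. \<exists>y\<in>sdom M. srel M lt [x,y]"
    using unbpsi unfolding unbounded_def n_def[symmetric] n0 by auto
  define K where "K = Suc (sum_list (xs@ts@ts'))"
  have Kbig: "\<And>v. v \<in> set (xs@ts@ts') \<Longrightarrow> v < K"
    unfolding K_def by (rule le_imp_less_Suc, rule member_le_sum_list) auto
  define C where "C = [K..<K+n]"
  define A where "A = K+n"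
  define Y where "Y = K+n+1"
  define T2 where "T2 = [K+n+2..<K+n+2+length ts']"
  define TS where "TS = xs @ C @ [A] @ ts"
  define U where "U = set TS"
  have dxt: "distinct (xs@ts)" and fvpsi: "fv \<psi> \<subseteq> set xs \<union> set ts" and wfpsi: "wf_fm fa ra \<psi>"
    using fmpsi unfolding fm_in_def by auto
  have dTS: "distinct TS" using dxt Kbig unfolding TS_def C_def A_def by (fastforce simp: distinct_append)
  have YU: "Y \<notin> U" using Kbig unfolding U_def TS_def Y_def C_def A_def by fastforce
  have dYTS: "distinct (Y#TS)" using dTS YU U_def by simp
  have lC: "length C = length xs" unfolding C_def n_def by simp
  have lT: "length T2 = length ts'" unfolding T2_def by (simp only: length_upt diff_add_inverse)
  have dT: "distinct T2" unfolding T2_def by simp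
  have d1: "set C \<inter> (set xs \<union> set ts') = {}" using Kbig unfolding C_def by fastforce
  have d2: "set T2 \<inter> (set xs \<union> set ts') = {}" using Kbig unfolding T2_def by fastforce
  have d3: "set T2 \<inter> set C = {}" unfolding T2_def C_def by auto
  have d4: "A \<notin> set T2" unfolding T2_def A_def by auto
  define B where "B = (\<lambda>e. EQ lt M \<phi> xs ts' C A T2 e \<and> sat M e \<psi>)"
  have dB: "dfn fa ra M U B" unfolding B_def
    by (rule dfn_conj; rule dfn_mono[OF EQ_dfn[OF lt2 fmphi lC lT d1 d2 d3 d4]] dfn_sat[OF wfpsi])
       (use fvpsi in \<open>auto simp: U_def TS_def\<close>)
  have dW: "\<And>k. dfn fa ra M U (Wr lt M B xs k)"
    by (rule Wr_dfn[OF lt2 dB _ False YU]) (auto simp: U_def TS_def)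
  obtain z1 where z1D: "z1 \<in> sdom M" and z1:
    "\<And>ys0. length ys0 = length xs \<Longrightarrow> set ys0 \<subseteq> sdom M \<Longrightarrow>
             (\<exists>ys1. length ys1 = length xs \<and> set ys1 \<subseteq> sdom M \<and>
                (\<forall>y\<in>set ys1. srel M lt [y, z1]) \<and> E_phi lt M \<phi> xs ts' ys0 ys1 a)"
  proof -
    have "\<exists>z1\<in>sdom M. srel M lt [a, z1] \<and>
           (\<forall>ys0. length ys0 = length xs \<and> set ys0 \<subseteq> sdom M \<longrightarrow>
             (\<exists>ys1. length ys1 = length xs \<and> set ys1 \<subseteq> sdom M \<and>
                (\<forall>y\<in>set ys1. srel M lt [y, z1]) \<and>
                E_phi lt M \<phi> xs ts' ys0 ys1 a))"
      using inacc[unfolded inaccessible_def, rule_format, OF fmphi mdl aD] .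
    then show ?thesis using that by blast
  qed
  define Reps where "Reps = {c. length c = n \<and> set c \<subseteq> sdom M \<and> (\<forall>y\<in>set c. srel M lt [y, z1])}"
  define vals where "vals acc c = acc @ replicate (n - length acc) a @ c @ [a] @ bs" for acc c :: "'a list"
  define g where "g acc c = upd_list (\<lambda>_. a) TS (vals acc c)" for acc c
  have lvals: "length (vals acc c) = length TS" if "length acc \<le> n" "length c = n" for acc c
    using that lbs lC unfolding vals_def TS_def n_def by simp
  have gmap: "map (g acc c) xs = acc @ replicate (n - length acc) a \<and> map (g acc c) C = c \<and> g acc c A = a
      \<and> map (g acc c) ts = bs" if "length acc \<le> n" "length c = n" for acc c
  proof -
    have "map (g acc c) TS = vals acc c" unfolding g_def by (rule map_upd[OF dTS lvals[OF that]])
    then have "map (g acc c) xs @ (map (g acc c) C @ [g acc c A] @ map (g acc c) ts)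
       = (acc @ replicate (n - length acc) a) @ (c @ [a] @ bs)"
      unfolding TS_def vals_def by simp
    then have h1: "map (g acc c) xs = acc @ replicate (n - length acc) a"
      and h2: "map (g acc c) C @ ([g acc c A] @ map (g acc c) ts) = c @ ([a] @ bs)"
      using append_eq_append_conv[of "map (g acc c) xs" "acc @ replicate (n - length acc) a"] that n_def
      by auto
    from h2 have h3: "map (g acc c) C = c" and h4: "[g acc c A] @ map (g acc c) ts = [a] @ bs"
      using append_eq_append_conv[of "map (g acc c) C" c] that lC n_def by auto
    from h4 show ?thesis using h1 h3 by simp
  qed
  have genv: "env_in M (g acc c)" if "set acc \<subseteq> sdom M" "set c \<subseteq> sdom M" for acc c
    unfolding g_def by (rule env_upd) (use that aD bsD in \<open>auto simp: env_in_def vals_def\<close>)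
  have gupd: "(g acc c)(xs ! length acc := x) = g (acc @ [x]) c" if "length acc < n" "length c = n" for acc c x
  proof -
    have i: "length acc < length TS" "TS ! length acc = xs ! length acc"
      using that unfolding TS_def n_def by (auto simp: nth_append)
    have "(g acc c)(xs ! length acc := x) = upd_list (\<lambda>_. a) TS ((vals acc c)[length acc := x])"
      unfolding g_def i(2)[symmetric] by (rule upd_update[OF dTS i(1) lvals]) (use that in auto)
    also have "(vals acc c)[length acc := x] = vals (acc @ [x]) c"
    proof -
      have "n - length acc = Suc (n - length (acc @ [x]))" using that by simp
      then show ?thesis unfolding vals_def by simp
    qed
    finally show ?thesis unfolding g_def .
  qed
  define P where "P c = (\<lambda>ys. E_phi lt M \<phi> xs ts' ys c a \<and> sat_at M \<psi> (xs @ ts) (ys @ bs))" for c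
  have link: "Wr lt M B xs k (g acc c) = unb lt M (P c) acc k"
    if "length acc + k = n" "set acc \<subseteq> sdom M" "length c = n" "set c \<subseteq> sdom M" for k acc c
    using that
  proof (induction k arbitrary: acc)
    case 0
    then have gm: "map (g acc c) xs = acc" "map (g acc c) C = c" "g acc c A = a" "map (g acc c) ts = bs"
      using gmap[of acc c] by auto
    have e: "EQ lt M \<phi> xs ts' C A T2 (g acc c) = E_phi lt M \<phi> xs ts' acc c a"
      using EQ_eq[OF fmphi lC lT dT d1 d2 d3 d4, of lt M "g acc c"] unfolding gm(1-3) .
    have ab: "acc @ bs = map (g acc c) (xs @ ts)" using gm by simp
    have s: "sat M (g acc c) \<psi> = sat_at M \<psi> (xs @ ts) (acc @ bs)"
      unfolding sat_at_def ab
    proof (rule sat_cong, intro ballI)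
      fix v assume "v \<in> fv \<psi>"
      then have "v \<in> set (xs @ ts)" using fvpsi by auto
      then show "g acc c v = upd_list (\<lambda>_. SOME d. d \<in> sdom M) (xs @ ts) (map (g acc c) (xs @ ts)) v"
        by (rule upd_map_self[symmetric])
    qed
    show ?case unfolding Wr.simps unb.simps B_def P_def e s ..
  next
    case (Suc k)
    have i: "length xs - Suc k = length acc" using Suc.prems n_def by simp
    have IHx: "Wr lt M B xs k (g (acc @ [x]) c) = unb lt M (P c) (acc @ [x]) k" if "x \<in> sdom M" for x
      using Suc.IH[of "acc @ [x]"] Suc.prems that by auto
    have gu: "(g acc c)(xs ! length acc := x) = g (acc@[x]) c" for x
      using gupd[of acc c x] Suc.prems by simp
    show ?case unfolding Wr.simps unb.simps i gu using IHx by auto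
  qed
  define \<psi>' where "\<psi>' = (\<lambda>ys. sat_at M \<psi> (xs @ ts) (ys @ bs))"
  have strat: "\<not> unb lt M \<psi>' acc k"
    if "length acc + k = n" "set acc \<subseteq> sdom M" "\<forall>c\<in>Reps. \<not> Wr lt M B xs k (g acc c)" for k acc
    using that
  proof (induction k arbitrary: acc)
    case 0
    show ?case
    proof
      assume "unb lt M \<psi>' acc 0"
      then have ps: "\<psi>' acc" by simp
      obtain ys1 where ys1: "length ys1 = length xs" "set ys1 \<subseteq> sdom M" "\<forall>y\<in>set ys1. srel M lt [y, z1]"
        "E_phi lt M \<phi> xs ts' acc ys1 a" using z1[of acc] 0 n_def by auto
      have R: "ys1 \<in> Reps" unfolding Reps_def using ys1 n_def by auto
      have "unb lt M (P ys1) acc 0" using ps ys1(4) unfolding P_def \<psi>'_def by simp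
      then have "Wr lt M B xs 0 (g acc ys1)" using link[of acc 0 ys1] 0 ys1 n_def by auto
      then show False using 0 R by blast
    qed
  next
    case (Suc k)
    have il: "length acc < n" "length xs - Suc k = length acc" using Suc.prems n_def by auto
    define v where "v = xs ! length acc"
    have "v \<in> set xs" unfolding v_def using il(1) n_def by (simp add: nth_mem)
    then have vU: "v \<in> set TS" unfolding TS_def by simp
    obtain z where zD: "z \<in> sdom M" and zb: "\<forall>f\<in>set acc \<union> {a, z1} \<union> set bs. srel M lt [f, z]"
      using S.upper[OF nomax, of "set acc \<union> {a, z1} \<union> set bs"] Suc.prems aD z1D bsD by auto
    define Q where "Q e = (\<not> (\<exists>x\<in>sdom M. srel M lt [e Y, x] \<and> Wr lt M B xs k (e(v:=x))))" for e
    have dQ: "dfn fa ra M (insert Y (set TS)) Q" unfolding Q_def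
      by (rule dfn_neg[OF step_dfn[OF lt2 dW[of k, unfolded U_def] vU YU[unfolded U_def]]])
    have Qchar: "Q (g'(Y:=\<alpha>)) \<longleftrightarrow> (\<forall>x\<in>sdom M. srel M lt [\<alpha>, x] \<longrightarrow> \<not> Wr lt M B xs k (g'(v:=x)))"
      if "env_in M g'" "\<alpha> \<in> sdom M" for g' \<alpha>
    proof -
      have "Wr lt M B xs k ((g'(Y:=\<alpha>))(v:=x)) = Wr lt M B xs k (g'(v:=x))" if "x \<in> sdom M" for x
        by (rule dfn_resp[OF dW]) (use \<open>env_in M g'\<close> \<open>\<alpha> \<in> sdom M\<close> that YU in \<open>auto simp: env_in_def\<close>)
      then show ?thesis unfolding Q_def using vU YU U_def by auto
    qed
    have "\<exists>\<alpha>\<in>sdom M. \<forall>g'\<in>(\<lambda>c. g acc c) ` Reps. Q (g'(Y:=\<alpha>))"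
    proof (rule S.uniform[OF dQ dYTS zD])
      fix g' assume "g' \<in> (\<lambda>c. g acc c) ` Reps"
      then obtain c where c: "c \<in> Reps" and g': "g' = g acc c" by auto
      have cl: "length c = n" "set c \<subseteq> sdom M" "\<forall>y\<in>set c. srel M lt [y, z1]" using c Reps_def by auto
      have env: "env_in M g'" unfolding g' by (rule genv) (use Suc.prems cl in auto)
      have bnd: "\<forall>w\<in>set TS. srel M lt [g' w, z]"
      proof
        fix w assume w: "w \<in> set TS"
        have "g' w \<in> set (vals acc c)" unfolding g' g_def
          by (rule upd_in[OF lvals w]) (use il cl in auto)
        then have "g' w \<in> set acc \<or> g' w = a \<or> g' w \<in> set c \<or> g' w \<in> set bs"
          unfolding vals_def by (auto split: if_splits)
        then show "srel M lt [g' w, z]"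
        proof (elim disjE)
          assume "g' w \<in> set c"
          then show ?thesis using cl zb S.lt_trans[of "g' w" z1 z] z1D zD by auto
        qed (use zb in auto)
      qed
      have nW: "\<not> Wr lt M B xs (Suc k) g'" using Suc.prems c g' by auto
      then obtain \<alpha> where \<alpha>: "\<alpha> \<in> sdom M" "\<forall>x\<in>sdom M. srel M lt [\<alpha>, x] \<longrightarrow> \<not> Wr lt M B xs k (g'(v:=x))"
        unfolding Wr.simps il(2) v_def by auto
      have ex: "\<exists>\<alpha>\<in>sdom M. Q (g'(Y:=\<alpha>))" using \<alpha> Qchar[OF env] by blast
      have up: "\<forall>\<alpha>\<in>sdom M. \<forall>\<beta>\<in>sdom M. Q (g'(Y:=\<alpha>)) \<longrightarrow> srel M lt [\<alpha>,\<beta>] \<longrightarrow> Q (g'(Y:=\<beta>))"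
        using Qchar[OF env] S.lt_trans by blast
      show "env_in M g' \<and> (\<forall>w\<in>set TS. srel M lt [g' w, z]) \<and> (\<exists>\<alpha>\<in>sdom M. Q (g'(Y:=\<alpha>))) \<and>
       (\<forall>\<alpha>\<in>sdom M. \<forall>\<beta>\<in>sdom M. Q (g'(Y:=\<alpha>)) \<longrightarrow> srel M lt [\<alpha>,\<beta>] \<longrightarrow> Q (g'(Y:=\<beta>)))"
        using env bnd ex up by blast
    qed
    then obtain \<alpha> where \<alpha>: "\<alpha> \<in> sdom M" "\<forall>c\<in>Reps. Q ((g acc c)(Y:=\<alpha>))" by auto
    have nx: "\<not> unb lt M \<psi>' (acc @ [x]) k" if x: "x \<in> sdom M" "srel M lt [\<alpha>, x]" for x
    proof (rule Suc.IH)
      show "length (acc @ [x]) + k = n" "set (acc @ [x]) \<subseteq> sdom M" using Suc.prems x by auto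
      show "\<forall>c\<in>Reps. \<not> Wr lt M B xs k (g (acc @ [x]) c)"
      proof
        fix c assume c: "c \<in> Reps"
        then have cl: "length c = n" "set c \<subseteq> sdom M" using Reps_def by auto
        have "env_in M (g acc c)" by (rule genv) (use Suc.prems cl in auto)
        then have "\<not> Wr lt M B xs k ((g acc c)(v:=x))" using Qchar \<alpha> c x by blast
        then show "\<not> Wr lt M B xs k (g (acc @ [x]) c)" using gupd[OF il(1) cl(1)] unfolding v_def by simp
      qed
    qed
    show ?case using \<alpha>(1) nx by auto
  qed
  show ?thesis
  proof (rule ccontr)
    assume H: "\<not> ?thesis"
    have "\<forall>c\<in>Reps. \<not> Wr lt M B xs n (g [] c)"
    proof
      fix c assume c: "c \<in> Reps"
      then have cl: "length c = n" "set c \<subseteq> sdom M" using Reps_def by auto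
      have "\<not> unb lt M (P c) [] n" using H cl n_def unfolding unbounded_def P_def by auto
      then show "\<not> Wr lt M B xs n (g [] c)" using link[of "[]" n c] cl by auto
    qed
    then have "\<not> unb lt M \<psi>' [] n" using strat[of "[]" n] by auto
    then show False using unbpsi unfolding unbounded_def \<psi>'_def n_def by simp
  qed
qed

end
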